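(* Let $\mathcal{I}$ be a proper admissible ideal on $\omega$ and let $X$ be a zero-dimensional Lindel\"of space. Then $X$ has the $\mathcal{I}$-Hurewicz property if and only if $X$ has the star-$\mathcal{I}$-Hurewicz property.
   Context: A space is zero-dimensional if it has a base of clopen sets. $St(A,\mathcal{P})=\bigcup\{P\in\mathcal{P}: P\cap A\ne\emptyset\}$. $X$ has the $\mathcal{I}$-Hurewicz property if for each sequence $\langle\mathcal{U}_n\rangle$ of open covers there are finite $\mathcal{V}_n\subseteq\mathcal{U}_n$ with $\{n : x\notin\bigcup\mathcal{V}_n\}\in\mathcal{I}$ for each $x\in X$. $X$ has the star-$\mathcal{I}$-Hurewicz property if for each sequence $\langle\mathcal{U}_n\rangle$ of open covers there are finite $\mathcal{V}_n\subseteq\mathcal{U}_n$ with $\{n : x\notin St(\bigcup\mathcal{V}_n,\mathcal{U}_n)\}\in\mathcal{I}$ for each $x\in X$. *)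

theory Defs
  imports "HOL-Analysis.Analysis"
begin

definition ideal_on_nat :: "nat set set \<Rightarrow> bool" where
  "ideal_on_nat I \<longleftrightarrow> {} \<in> I \<and>
     (\<forall>A B. A \<in> I \<and> B \<subseteq> A \<longrightarrow> B \<in> I) \<and>
     (\<forall>A B. A \<in> I \<and> B \<in> I \<longrightarrow> A \<union> B \<in> I)"

definition proper_ideal :: "nat set set \<Rightarrow> bool" where
  "proper_ideal I \<longleftrightarrow> ideal_on_nat I \<and> (UNIV :: nat set) \<notin> I"

definition admissible_ideal :: "nat set set \<Rightarrow> bool" where
  "admissible_ideal I \<longleftrightarrow> ideal_on_nat I \<and> (\<forall>n. {n} \<in> I)"

definition open_cover :: "'a topology \<Rightarrow> 'a set set \<Rightarrow> bool" where
  "open_cover X \<U> \<longleftrightarrow> (\<forall>U\<in>\<U>. openin X U) \<and> \<Union>\<U> = topspace X"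

definition star :: "'a set \<Rightarrow> 'a set set \<Rightarrow> 'a set" where
  "star A \<P> = \<Union>{P \<in> \<P>. P \<inter> A \<noteq> {}}"

definition zero_dimensional :: "'a topology \<Rightarrow> bool" where
  "zero_dimensional X \<longleftrightarrow> (\<exists>\<B>. (\<forall>B\<in>\<B>. openin X B \<and> closedin X B) \<and>
     (\<forall>U x. openin X U \<and> x \<in> U \<longrightarrow> (\<exists>B\<in>\<B>. x \<in> B \<and> B \<subseteq> U)))"

definition I_Hurewicz :: "nat set set \<Rightarrow> 'a topology \<Rightarrow> bool" where
  "I_Hurewicz I X \<longleftrightarrow> (\<forall>\<U> :: nat \<Rightarrow> 'a set set. (\<forall>n. open_cover X (\<U> n)) \<longrightarrow>
     (\<exists>\<V>. (\<forall>n. finite (\<V> n) \<and> \<V> n \<subseteq> \<U> n) \<and>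
          (\<forall>x\<in>topspace X. {n. x \<notin> \<Union>(\<V> n)} \<in> I)))"

definition star_I_Hurewicz :: "nat set set \<Rightarrow> 'a topology \<Rightarrow> bool" where
  "star_I_Hurewicz I X \<longleftrightarrow> (\<forall>\<U> :: nat \<Rightarrow> 'a set set. (\<forall>n. open_cover X (\<U> n)) \<longrightarrow>
     (\<exists>\<V>. (\<forall>n. finite (\<V> n) \<and> \<V> n \<subseteq> \<U> n) \<and>
          (\<forall>x\<in>topspace X. {n. x \<notin> star (\<Union>(\<V> n)) (\<U> n)} \<in> I)))"

end

theory Submission imports Defs begin
lemma disj_refine:
  assumes zd: "zero_dimensional X" and L: "Lindelof_space X" and oc: "open_cover X \<U>"
  shows "\<exists>\<W>. open_cover X \<W> \<and> (\<forall>w\<in>\<W>. \<exists>u\<in>\<U>. w \<subseteq> u) \<and>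
     (\<forall>a\<in>\<W>. \<forall>b\<in>\<W>. a \<noteq> b \<longrightarrow> a \<inter> b = {})"
proof -
  obtain \<B> where B1: "\<forall>B\<in>\<B>. openin X B \<and> closedin X B"
    and B2: "\<forall>U x. openin X U \<and> x \<in> U \<longrightarrow> (\<exists>B\<in>\<B>. x \<in> B \<and> B \<subseteq> U)"
    using zd unfolding zero_dimensional_def by blast
  define C where "C = {B \<in> \<B>. \<exists>u\<in>\<U>. B \<subseteq> u}"
  have Cop: "\<forall>c\<in>C. openin X c" using B1 C_def by auto
  have "\<Union>C = topspace X"
  proof
    show "\<Union>C \<subseteq> topspace X" using Cop openin_subset by blast
    show "topspace X \<subseteq> \<Union>C"
    proof
      fix x assume x: "x \<in> topspace X"
      then obtain u where "u \<in> \<U>" "x \<in> u" using oc unfolding open_cover_def by blast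
      moreover have "openin X u" using oc \<open>u \<in> \<U>\<close> unfolding open_cover_def by blast
      ultimately obtain B where "B \<in> \<B>" "x \<in> B" "B \<subseteq> u" using B2 by blast
      then show "x \<in> \<Union>C" using C_def \<open>u \<in> \<U>\<close> by blast
    qed
  qed
  then obtain V where V: "countable V" "V \<subseteq> C" "\<Union>V = topspace X"
    using L Cop unfolding Lindelof_space_def by meson
  show ?thesis
  proof (cases "V = {}")
    case True
    then have "topspace X = {}" using V(3) by simp
    then have "open_cover X {}" unfolding open_cover_def by simp
    then show ?thesis by blast
  next
    case False
    define b where "b = from_nat_into V"
    have rb: "range b = V" unfolding b_def using False V(1) by (rule range_from_nat_into)
    have bC: "b k \<in> C" for k using rb V(2) by blast
    define d where "d k = b k - \<Union>(b ` {..<k})" for k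
    have dop: "openin X (d k)" for k
      unfolding d_def
      apply (rule openin_diff)
      using bC Cop apply blast
      apply (rule closedin_Union)
       apply simp
      using bC B1 unfolding C_def by blast
    have dsub: "\<exists>u\<in>\<U>. d k \<subseteq> u" for k
    proof -
      obtain u where "u \<in> \<U>" "b k \<subseteq> u" using bC[of k] unfolding C_def by blast
      moreover have "d k \<subseteq> b k" unfolding d_def by blast
      ultimately show ?thesis by blast
    qed
    have cov: "\<Union>(range d) = topspace X"
    proof
      show "\<Union>(range d) \<subseteq> topspace X" using dop openin_subset by blast
      show "topspace X \<subseteq> \<Union>(range d)"
      proof
        fix x assume "x \<in> topspace X"
        then obtain k where k: "x \<in> b k" using V(3) rb by blast
        define m where "m = (LEAST k. x \<in> b k)"
        have "x \<in> b m" unfolding m_def by (rule LeastI[of "\<lambda>k. x \<in> b k" k, OF k])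
        moreover have "x \<notin> b j" if "j < m" for j by (rule not_less_Least[of j "\<lambda>k. x \<in> b k", OF that[unfolded m_def]])
        ultimately have "x \<in> d m" unfolding d_def by blast
        then show "x \<in> \<Union>(range d)" by blast
      qed
    qed
    have disj: "d j \<inter> d k = {}" if "j < k" for j k
    proof -
      have "b j \<subseteq> \<Union>(b ` {..<k})" using that by blast
      then show ?thesis unfolding d_def by blast
    qed
    show ?thesis
    proof (intro exI[of _ "range d"] conjI ballI impI)
      show "open_cover X (range d)" using dop cov unfolding open_cover_def by blast
      show "\<exists>u\<in>\<U>. w \<subseteq> u" if "w \<in> range d" for w using that dsub by blast
      fix a c assume "a \<in> range d" "c \<in> range d" "a \<noteq> c"
      then obtain j k where "a = d j" "c = d k" "j \<noteq> k" by blast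
      then show "a \<inter> c = {}" using disj
        by (metis Int_commute linorder_neqE_nat)
    qed
  qed
qed

lemma star_sup:
  assumes "V \<subseteq> U" shows "\<Union>V \<subseteq> star (\<Union>V) U"
proof
  fix x assume "x \<in> \<Union>V"
  then obtain v where v: "v \<in> V" "x \<in> v" by (rule UnionE)
  then have "v \<in> {P \<in> U. P \<inter> \<Union>V \<noteq> {}}" using assms by blast
  then show "x \<in> star (\<Union>V) U" unfolding star_def using v(2) by (rule UnionI)
qed
lemma down: assumes "proper_ideal I" "A \<in> I" "B \<subseteq> A" shows "B \<in> I"
  using assms unfolding proper_ideal_def ideal_on_nat_def by blast
lemma dir1: 
  assumes "proper_ideal I" and H: "I_Hurewicz I X"
  shows "star_I_Hurewicz I X"
  unfolding star_I_Hurewicz_def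
proof (intro allI impI)
  fix \<U> :: "nat \<Rightarrow> 'a set set" assume oc: "\<forall>n. open_cover X (\<U> n)"
  obtain \<V> where V1: "\<forall>n. finite (\<V> n) \<and> \<V> n \<subseteq> \<U> n"
    and V2: "\<forall>x\<in>topspace X. {n. x \<notin> \<Union>(\<V> n)} \<in> I"
    using H oc unfolding I_Hurewicz_def by blast
  have sub: "{n. x \<notin> star (\<Union>(\<V> n)) (\<U> n)} \<subseteq> {n. x \<notin> \<Union>(\<V> n)}" for x
    using star_sup V1 by blast
  show "\<exists>\<V>. (\<forall>n. finite (\<V> n) \<and> \<V> n \<subseteq> \<U> n) \<and>
      (\<forall>x\<in>topspace X. {n. x \<notin> star (\<Union>(\<V> n)) (\<U> n)} \<in> I)"
  proof (intro exI[of _ \<V>] conjI ballI)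
    show "\<forall>n. finite (\<V> n) \<and> \<V> n \<subseteq> \<U> n" using V1 by blast
    fix x assume "x \<in> topspace X"
    then show "{n. x \<notin> star (\<Union>(\<V> n)) (\<U> n)} \<in> I" using V2 sub down[OF assms(1)] by blast
  qed
qed

lemma dir2:
  assumes "proper_ideal I" and zd: "zero_dimensional X" and L: "Lindelof_space X"
    and S: "star_I_Hurewicz I X"
  shows "I_Hurewicz I X"
  unfolding I_Hurewicz_def
proof (intro allI impI)
  fix \<U> :: "nat \<Rightarrow> 'a set set" assume oc: "\<forall>n. open_cover X (\<U> n)"
  have "\<forall>n. \<exists>\<W>. open_cover X \<W> \<and> (\<forall>w\<in>\<W>. \<exists>u\<in>\<U> n. w \<subseteq> u) \<and>
     (\<forall>a\<in>\<W>. \<forall>b\<in>\<W>. a \<noteq> b \<longrightarrow> a \<inter> b = {})"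
    using disj_refine[OF zd L] oc by blast
  then obtain \<W> where W1: "\<And>n. open_cover X (\<W> n)"
    and W2: "\<And>n. \<forall>w\<in>\<W> n. \<exists>u\<in>\<U> n. w \<subseteq> u"
    and W3: "\<And>n. \<forall>a\<in>\<W> n. \<forall>b\<in>\<W> n. a \<noteq> b \<longrightarrow> a \<inter> b = {}"
    by metis
  obtain \<V> where V1: "\<forall>n. finite (\<V> n) \<and> \<V> n \<subseteq> \<W> n"
    and V2: "\<forall>x\<in>topspace X. {n. x \<notin> star (\<Union>(\<V> n)) (\<W> n)} \<in> I"
    using S W1 unfolding star_I_Hurewicz_def by blast
  have "\<forall>n. \<forall>w. \<exists>u. w \<in> \<W> n \<longrightarrow> u \<in> \<U> n \<and> w \<subseteq> u" using W2 by blast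
  then obtain f where f: "\<And>n w. w \<in> \<W> n \<Longrightarrow> f n w \<in> \<U> n \<and> w \<subseteq> f n w"
    by metis
  define \<V>' where "\<V>' n = f n ` \<V> n" for n
  have st: "star (\<Union>(\<V> n)) (\<W> n) \<subseteq> \<Union>(\<V>' n)" for n
  proof
    fix x assume "x \<in> star (\<Union>(\<V> n)) (\<W> n)"
    then obtain P v where P: "P \<in> \<W> n" "x \<in> P" "v \<in> \<V> n" "P \<inter> v \<noteq> {}"
      unfolding star_def by blast
    have "v \<in> \<W> n" using P(3) V1 by blast
    then have "P = v" using W3 P by blast
    then show "x \<in> \<Union>(\<V>' n)" using P f[of v n] \<V>'_def \<open>v \<in> \<W> n\<close> by blast
  qed
  show "\<exists>\<V>. (\<forall>n. finite (\<V> n) \<and> \<V> n \<subseteq> \<U> n) \<and>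
      (\<forall>x\<in>topspace X. {n. x \<notin> \<Union>(\<V> n)} \<in> I)"
  proof (intro exI[of _ \<V>'] conjI allI ballI)
    fix n show "finite (\<V>' n)" using V1 \<V>'_def by simp
    show "\<V>' n \<subseteq> \<U> n" unfolding \<V>'_def
    proof (rule image_subsetI)
      fix v assume "v \<in> \<V> n"
      then have "v \<in> \<W> n" using V1 by blast
      then show "f n v \<in> \<U> n" using f by blast
    qed
  next
    fix x assume "x \<in> topspace X"
    show "{n. x \<notin> \<Union>(\<V>' n)} \<in> I"
    proof (rule down[OF assms(1)])
      show "{n. x \<notin> star (\<Union>(\<V> n)) (\<W> n)} \<in> I" using V2 \<open>x \<in> topspace X\<close> by blast
      show "{n. x \<notin> \<Union>(\<V>' n)} \<subseteq> {n. x \<notin> star (\<Union>(\<V> n)) (\<W> n)}" using st by blast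
    qed
  qed
qed

theorem mainTheorem14:
  fixes I :: "nat set set" and X :: "'a topology"
  assumes "proper_ideal I" and "admissible_ideal I"
    and "zero_dimensional X" and "Lindelof_space X"
  shows "I_Hurewicz I X \<longleftrightarrow> star_I_Hurewicz I X"
  using dir1[OF assms(1)] dir2[OF assms(1,3,4)] by blast

end
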